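(* Let $G$ be a finitely generated group, $X,Y$ uniform spaces, $\mu$ a Borel measure on $X$, and let $\Phi\in Act(G,X)$ and $\Psi\in Act(G,Y)$ be uniformly conjugate via a uniform equivalence $h:X\to Y$ (i.e. $h\circ\Phi_g=\Psi_g\circ h$ for all $g\in G$). Let $h^*(\mu)$ be the measure on $Y$ given by $h^*(\mu)(A)=\mu(h^{-1}(A))$. Then: (i) if $\Phi$ has $\mu$-shadowing, $\Psi$ has $h^*(\mu)$-shadowing; (ii) if $\Phi$ is $\mu$-expansive, $\Psi$ is $h^*(\mu)$-expansive; (iii) if $\Phi$ is $\mu$-persistent, $\Psi$ is $h^*(\mu)$-persistent; (iv) if $\Phi$ is $\mu$-topologically stable, $\Psi$ is $h^*(\mu)$-topologically stable.
   Context: $D[x]=\{y:(x,y)\in D\}$. $Act(G,X)$: maps $\Phi:G\times X\to X$ with each $\Phi_g$ a uniform equivalence, $\Phi_e=\mathrm{id}$, $\Phi_{g_1g_2}=\Phi_{g_1}\circ\Phi_{g_2}$. Generating sets are finite symmetric. For a measure $\nu$ and action $\Phi$ on a uniform space $Z$: $\Phi$ is $\nu$-expansive if there is a closed entourage $D$ with $\nu(\Gamma_D(x))=0$ for all $x$, where $\Gamma_D(x)=\{y:(\Phi_g(x),\Phi_g(y))\in D\ \forall g\}$. $\{x_g\}$ is a $D$-pseudo orbit (w.r.t. $S$) if $(x_{sg},\Phi_s(x_g))\in D$ for all $s\in S,g$; through $B$ if $x_e\in B$; $E$-shadowed by $x$ if $(x_g,\Phi_g(x))\in E$ for all $g$.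 $\nu$-shadowing: for some $S$, for every entourage $E$ there are an entourage $D$ and measurable $B$ with $\nu(Z\setminus B)=0$ such that every $D$-pseudo orbit through $B$ is $E$-shadowed by some point. $\nu$-persistent: for some $S$, for every $E$ there are $D$ and measurable $B$, $\nu(Z\setminus B)=0$, such that whenever $\Psi'\in Act(G,Z)$ satisfies $(\Psi'_s(x),\Phi_s(x))\in D$ for all $x,s\in S$, for each $x\in B$ there is $y$ with $(\Psi'_g(x),\Phi_g(y))\in E$ for all $g$. For set-valued $H:Z\to\mathcal{P}(Z)$: $Dom(H)=\{x:H(x)\ne\emptyset\}$; $(Id,H)\in E$ means $H(x)\subset E[x]$ for all $x$; upper semi-continuous: for each $x\in Dom(H)$ and open $O\supset H(x)$ there is an entourage $D$ with $H(y)\subset O$ whenever $(x,y)\in D$. $\nu$-topologically stable: for some $S$, for every $E$ there is $D$ such that for every $\Psi'\in Act(G,Z)$ with $(\Psi'_s(x),\Phi_s(x))\in D$ for all $x,s\in S$ there is an upper semi-continuous compact-valued $H$ with measurable domain, $\nu(Z\setminus Dom(H))=0$, $\nu(H(x))=0$ for all $x$, $(Id,H)\in E$, and $\Phi_g(H(x))=H(\Psi'_g(x))$ for all $g,x$. *)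

theory Defs
  imports "HOL-Analysis.Analysis"
begin

(* Groups are written additively (type class group_add, not assumed commutative):
   g1 g2 of the paper is  g1 + g2,  e is 0. *)

definition entourage :: "('a::uniform_space \<times> 'a) set \<Rightarrow> bool" where
  "entourage E \<longleftrightarrow> eventually (\<lambda>p. p \<in> E) uniformity"

definition uniform_equiv :: "('a::uniform_space \<Rightarrow> 'b::uniform_space) \<Rightarrow> bool" where
  "uniform_equiv h \<longleftrightarrow> bij h \<and> uniformly_continuous_on UNIV h
      \<and> uniformly_continuous_on UNIV (inv h)"

(* the subgroup generated by S (S symmetric in our uses) *)
inductive_set gen_by :: "'g::group_add set \<Rightarrow> 'g set" for S where
  gen_zero: "0 \<in> gen_by S"
| gen_step: "s \<in> S \<Longrightarrow> g \<in> gen_by S \<Longrightarrow> s + g \<in> gen_by S"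

definition gen_set :: "'g::group_add set \<Rightarrow> bool" where
  "gen_set S \<longleftrightarrow> finite S \<and> uminus ` S = S \<and> gen_by S = UNIV"

definition fin_gen_group :: "'g::group_add itself \<Rightarrow> bool" where
  "fin_gen_group TYPE('g) \<longleftrightarrow> (\<exists>S::'g set. gen_set S)"

definition Act :: "('g::group_add \<Rightarrow> 'a::uniform_space \<Rightarrow> 'a) set" where
  "Act = {\<Phi>. (\<forall>g. uniform_equiv (\<Phi> g)) \<and> \<Phi> 0 = id
              \<and> (\<forall>g1 g2. \<Phi> (g1 + g2) = \<Phi> g1 \<circ> \<Phi> g2)}"

definition Gamma :: "('g \<Rightarrow> 'a \<Rightarrow> 'a) \<Rightarrow> ('a \<times> 'a) set \<Rightarrow> 'a \<Rightarrow> 'a set" where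
  "Gamma \<Phi> D x = {y. \<forall>g. (\<Phi> g x, \<Phi> g y) \<in> D}"

definition expansive_meas ::
    "'a::uniform_space measure \<Rightarrow> ('g::group_add \<Rightarrow> 'a \<Rightarrow> 'a) \<Rightarrow> bool" where
  "expansive_meas \<nu> \<Phi> \<longleftrightarrow>
     (\<exists>D. entourage D \<and> closed D \<and> (\<forall>x. emeasure \<nu> (Gamma \<Phi> D x) = 0))"

definition pseudo_orbit ::
    "('g::group_add \<Rightarrow> 'a \<Rightarrow> 'a) \<Rightarrow> 'g set \<Rightarrow> ('a \<times> 'a) set \<Rightarrow> ('g \<Rightarrow> 'a) \<Rightarrow> bool" where
  "pseudo_orbit \<Phi> S D xs \<longleftrightarrow> (\<forall>s\<in>S. \<forall>g. (xs (s + g), \<Phi> s (xs g)) \<in> D)"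

definition shadowed ::
    "('g::group_add \<Rightarrow> 'a \<Rightarrow> 'a) \<Rightarrow> ('a \<times> 'a) set \<Rightarrow> ('g \<Rightarrow> 'a) \<Rightarrow> 'a \<Rightarrow> bool" where
  "shadowed \<Phi> E xs x \<longleftrightarrow> (\<forall>g. (xs g, \<Phi> g x) \<in> E)"

definition full_meas_set :: "'a measure \<Rightarrow> 'a set \<Rightarrow> bool" where
  "full_meas_set \<nu> B \<longleftrightarrow> B \<in> sets \<nu> \<and> emeasure \<nu> (space \<nu> - B) = 0"

definition shadowing_meas ::
    "'a::uniform_space measure \<Rightarrow> ('g::group_add \<Rightarrow> 'a \<Rightarrow> 'a) \<Rightarrow> bool" where
  "shadowing_meas \<nu> \<Phi> \<longleftrightarrow> (\<exists>S. gen_set S \<and>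
     (\<forall>E. entourage E \<longrightarrow> (\<exists>D B. entourage D \<and> full_meas_set \<nu> B \<and>
        (\<forall>xs. pseudo_orbit \<Phi> S D xs \<and> xs 0 \<in> B \<longrightarrow> (\<exists>x. shadowed \<Phi> E xs x)))))"

definition persistent_meas ::
    "'a::uniform_space measure \<Rightarrow> ('g::group_add \<Rightarrow> 'a \<Rightarrow> 'a) \<Rightarrow> bool" where
  "persistent_meas \<nu> \<Phi> \<longleftrightarrow> (\<exists>S. gen_set S \<and>
     (\<forall>E. entourage E \<longrightarrow> (\<exists>D B. entourage D \<and> full_meas_set \<nu> B \<and>
        (\<forall>\<Psi>' \<in> Act. (\<forall>x. \<forall>s\<in>S. (\<Psi>' s x, \<Phi> s x) \<in> D) \<longrightarrow>
           (\<forall>x\<in>B. \<exists>y. \<forall>g. (\<Psi>' g x, \<Phi> g y) \<in> E)))))"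

definition Dom :: "('a \<Rightarrow> 'b set) \<Rightarrow> 'a set" where
  "Dom H = {x. H x \<noteq> {}}"

definition usc :: "('a::uniform_space \<Rightarrow> 'a set) \<Rightarrow> bool" where
  "usc H \<longleftrightarrow> (\<forall>x\<in>Dom H. \<forall>U. open U \<and> H x \<subseteq> U \<longrightarrow>
      (\<exists>D. entourage D \<and> (\<forall>y. (x, y) \<in> D \<longrightarrow> H y \<subseteq> U)))"

definition top_stable_meas ::
    "'a::uniform_space measure \<Rightarrow> ('g::group_add \<Rightarrow> 'a \<Rightarrow> 'a) \<Rightarrow> bool" where
  "top_stable_meas \<nu> \<Phi> \<longleftrightarrow> (\<exists>S. gen_set S \<and>
     (\<forall>E. entourage E \<longrightarrow> (\<exists>D. entourage D \<and>
        (\<forall>\<Psi>' \<in> Act. (\<forall>x. \<forall>s\<in>S. (\<Psi>' s x, \<Phi> s x) \<in> D) \<longrightarrow>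
           (\<exists>H. usc H \<and> (\<forall>x. compact (H x)) \<and> Dom H \<in> sets \<nu>
              \<and> emeasure \<nu> (space \<nu> - Dom H) = 0
              \<and> (\<forall>x. emeasure \<nu> (H x) = 0)
              \<and> (\<forall>x. \<forall>y\<in>H x. (x, y) \<in> E)
              \<and> (\<forall>g x. \<Phi> g ` H x = H (\<Psi>' g x)))))))"

end

theory Submission imports Defs begin

lemma ent_pull:
  fixes h :: "'a::uniform_space \<Rightarrow> 'b::uniform_space"
  assumes "uniformly_continuous_on UNIV h" "entourage E"
  shows "entourage {p. (h (fst p), h (snd p)) \<in> E}"
proof -
  have "eventually (\<lambda>(x, y). x \<in> UNIV \<longrightarrow> y \<in> UNIV \<longrightarrow> (\<lambda>p. p \<in> E) (h x, h y)) uniformity"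
    using uniformly_continuous_onD[OF assms(1)] assms(2) unfolding entourage_def by blast
  then show ?thesis unfolding entourage_def
    by (rule eventually_mono) (auto split: prod.splits)
qed

lemma ueq:
  assumes "uniform_equiv h"
  shows "bij h" "continuous_on UNIV h" "continuous_on UNIV (inv h)"
    "\<And>x. h (inv h x) = x" "\<And>x. inv h (h x) = x"
    "uniformly_continuous_on UNIV h" "uniformly_continuous_on UNIV (inv h)"
  using assms unfolding uniform_equiv_def
  by (auto intro: uniformly_continuous_imp_continuous bij_inv_eq_iff simp: bij_is_inj bij_is_surj surj_f_inv_f)

lemma ueq_comp:
  assumes "uniform_equiv f" "uniform_equiv g"
  shows "uniform_equiv (f \<circ> g)"
proof -
  have bf: "bij f" and bg: "bij g" using assms uniform_equiv_def by auto
  have "inv (f \<circ> g) = inv g \<circ> inv f" using bf bg by (simp add: o_inv_distrib)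
  moreover have "uniformly_continuous_on UNIV (\<lambda>x. f (g x))"
    using uniformly_continuous_on_compose[of UNIV g f] assms unfolding uniform_equiv_def
    by (auto simp: bij_is_surj)
  moreover have "uniformly_continuous_on UNIV (\<lambda>x. inv g (inv f x))"
    using uniformly_continuous_on_compose[of UNIV "inv f" "inv g"] assms unfolding uniform_equiv_def
    by (auto simp: bij_is_surj bij_imp_bij_inv)
  ultimately show ?thesis using bf bg unfolding uniform_equiv_def
    by (auto simp: comp_def bij_comp[unfolded comp_def])
qed

theorem proposition4p2:
  fixes \<Phi> :: "'g::group_add \<Rightarrow> 'a::uniform_space \<Rightarrow> 'a"
    and \<Psi> :: "'g \<Rightarrow> 'b::uniform_space \<Rightarrow> 'b"
    and h :: "'a \<Rightarrow> 'b"
    and \<mu> :: "'a measure"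
  assumes "fin_gen_group TYPE('g)"
    and "sets \<mu> = sets borel"
    and "\<Phi> \<in> Act" and "\<Psi> \<in> Act"
    and "uniform_equiv h"
    and "\<forall>g. h \<circ> \<Phi> g = \<Psi> g \<circ> h"
  shows "(shadowing_meas \<mu> \<Phi> \<longrightarrow> shadowing_meas (distr \<mu> borel h) \<Psi>)
       \<and> (expansive_meas \<mu> \<Phi> \<longrightarrow> expansive_meas (distr \<mu> borel h) \<Psi>)
       \<and> (persistent_meas \<mu> \<Phi> \<longrightarrow> persistent_meas (distr \<mu> borel h) \<Psi>)
       \<and> (top_stable_meas \<mu> \<Phi> \<longrightarrow> top_stable_meas (distr \<mu> borel h) \<Psi>)"
proof -
  note U = ueq[OF assms(5)]
  define \<nu> where "\<nu> = distr \<mu> borel h"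
  have spmu: "space \<mu> = UNIV" using sets_eq_imp_space_eq[OF assms(2)] by simp
  have hm: "h \<in> measurable \<mu> borel"
    using borel_measurable_continuous_onI[OF U(2)] measurable_cong_sets[OF assms(2) refl] by blast
  have ihm: "inv h \<in> borel_measurable borel" using borel_measurable_continuous_onI[OF U(3)] .
  have hm2: "h \<in> borel_measurable borel" using borel_measurable_continuous_onI[OF U(2)] .
  have setsnu: "sets \<nu> = sets borel" unfolding \<nu>_def by simp
  have spnu: "space \<nu> = UNIV" unfolding \<nu>_def by simp
  have hv1: "h -` (inv h -` A) = A" for A using U(5) by auto
  have hv2: "inv h -` (h -` A) = A" for A using U(4) by auto
  have nuA: "emeasure \<nu> A = emeasure \<mu> (h -` A)" for A
  proof (cases "A \<in> sets borel")
    case True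
    then show ?thesis unfolding \<nu>_def using emeasure_distr[OF hm] spmu by simp
  next
    case False
    have "h -` A \<notin> sets borel"
    proof
      assume "h -` A \<in> sets borel"
      then have "inv h -` (h -` A) \<in> sets borel" using measurable_sets_borel[OF ihm] by blast
      with False hv2 show False by simp
    qed
    then show ?thesis using False emeasure_notin_sets assms(2) setsnu by metis
  qed
  have inB: "inv h -` B \<in> sets borel" if "B \<in> sets \<mu>" for B
    using measurable_sets_borel[OF ihm] that assms(2) by blast
  have full: "full_meas_set \<nu> (inv h -` B)" if "full_meas_set \<mu> B" for B
  proof -
    have "UNIV - inv h -` B = inv h -` (UNIV - B)" by auto
    then have "h -` (UNIV - inv h -` B) = UNIV - B" using hv1 by simp
    then show ?thesis using that inB setsnu spnu spmu nuA unfolding full_meas_set_def by simp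
  qed
  have Phi_eq: "\<Phi> g x = inv h (\<Psi> g (h x))" for g x
    using assms(6) U(5) by (metis comp_apply)
  have entD: "entourage {p. (inv h (fst p), inv h (snd p)) \<in> D}" if "entourage D" for D
    using ent_pull[OF U(7) that] .
  have entE: "entourage {p. (h (fst p), h (snd p)) \<in> E}" if "entourage E" for E
    using ent_pull[OF U(6) that] .
  have hPhi: "h (\<Phi> g x) = \<Psi> g (h x)" for g x
    using assms(6) by (metis comp_apply)
  have uinv: "uniform_equiv (inv h)"
    using assms(5) U unfolding uniform_equiv_def by (simp add: bij_imp_bij_inv inv_inv_eq)
  have opv: "open (h -` V)" if "open V" for V
    using continuous_on_open_vimage[of UNIV h] U(2) that by simp
  have PhiAct: "(\<lambda>g. inv h \<circ> \<Psi>' g \<circ> h) \<in> Act" if "\<Psi>' \<in> Act" for \<Psi>' :: "'g \<Rightarrow> 'b \<Rightarrow> 'b"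
  proof -
    have "uniform_equiv (inv h \<circ> \<Psi>' g \<circ> h)" for g
    proof -
      have "uniform_equiv (\<Psi>' g)" using that unfolding Act_def by blast
      then show ?thesis using ueq_comp[OF ueq_comp[OF uinv] assms(5)] by blast
    qed
    moreover have "inv h \<circ> \<Psi>' 0 \<circ> h = id" using that U(5) unfolding Act_def by (auto simp: fun_eq_iff)
    moreover have "inv h \<circ> \<Psi>' (g1 + g2) \<circ> h = (inv h \<circ> \<Psi>' g1 \<circ> h) \<circ> (inv h \<circ> \<Psi>' g2 \<circ> h)" for g1 g2
      using that U(4) unfolding Act_def by (auto simp: fun_eq_iff)
    ultimately show ?thesis unfolding Act_def by blast
  qed
  have P1: "shadowing_meas \<nu> \<Psi>" if asm0: "shadowing_meas \<mu> \<Phi>"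
  proof -
    obtain S where S: "gen_set S" and H: "\<forall>E. entourage E \<longrightarrow> (\<exists>D B. entourage D \<and> full_meas_set \<mu> B \<and>
        (\<forall>xs. pseudo_orbit \<Phi> S D xs \<and> xs 0 \<in> B \<longrightarrow> (\<exists>x. shadowed \<Phi> E xs x)))"
      using asm0 unfolding shadowing_meas_def by blast
    show ?thesis unfolding shadowing_meas_def
    proof (rule exI[of _ S], intro conjI allI impI)
      show "gen_set S" by fact
      fix E :: "('b \<times> 'b) set" assume E: "entourage E"
      obtain D B where D: "entourage D" and B: "full_meas_set \<mu> B" and sh: "\<forall>xs. pseudo_orbit \<Phi> S D xs \<and> xs 0 \<in> B \<longrightarrow> (\<exists>x. shadowed \<Phi> {p. (h (fst p), h (snd p)) \<in> E} xs x)"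
        using H entE[OF E] by blast
      show "\<exists>D B. entourage D \<and> full_meas_set \<nu> B \<and> (\<forall>ys. pseudo_orbit \<Psi> S D ys \<and> ys 0 \<in> B \<longrightarrow> (\<exists>y. shadowed \<Psi> E ys y))"
      proof (rule exI[of _ "{p. (inv h (fst p), inv h (snd p)) \<in> D}"], rule exI[of _ "inv h -` B"], intro conjI allI impI)
        show "entourage {p. (inv h (fst p), inv h (snd p)) \<in> D}" using entD[OF D] .
        show "full_meas_set \<nu> (inv h -` B)" using full[OF B] .
        fix ys assume ys: "pseudo_orbit \<Psi> S {p. (inv h (fst p), inv h (snd p)) \<in> D} ys \<and> ys 0 \<in> inv h -` B"
        then have "pseudo_orbit \<Phi> S D (inv h \<circ> ys) \<and> (inv h \<circ> ys) 0 \<in> B"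
          unfolding pseudo_orbit_def by (auto simp: Phi_eq U(4))
        then obtain x where "shadowed \<Phi> {p. (h (fst p), h (snd p)) \<in> E} (inv h \<circ> ys) x" using sh by blast
        then show "\<exists>y. shadowed \<Psi> E ys y" unfolding shadowed_def
          by (intro exI[of _ "h x"]) (auto simp: hPhi U(4))
      qed
    qed
  qed
  have P2: "expansive_meas \<nu> \<Psi>" if asm0: "expansive_meas \<mu> \<Phi>"
  proof -
    obtain D where D: "entourage D" "closed D" "\<forall>x. emeasure \<mu> (Gamma \<Phi> D x) = 0"
      using asm0 unfolding expansive_meas_def by blast
    define f where "f = (\<lambda>p::'b\<times>'b. (inv h (fst p), inv h (snd p)))"
    have "continuous_on UNIV f" unfolding f_def
      by (intro continuous_intros continuous_on_compose2[OF U(3)]) auto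
    then have cl: "closed (f -` D)" using continuous_on_closed_vimage[of UNIV f] D(2) by simp
    have eq: "f -` D = {p. (inv h (fst p), inv h (snd p)) \<in> D}" unfolding f_def by auto
    show ?thesis unfolding expansive_meas_def
    proof (rule exI[of _ "{p. (inv h (fst p), inv h (snd p)) \<in> D}"], intro conjI allI)
      show "entourage {p. (inv h (fst p), inv h (snd p)) \<in> D}" using entD[OF D(1)] .
      show "closed {p. (inv h (fst p), inv h (snd p)) \<in> D}" using cl eq by simp
      fix y
      have "h -` Gamma \<Psi> {p. (inv h (fst p), inv h (snd p)) \<in> D} y = Gamma \<Phi> D (inv h y)"
        unfolding Gamma_def by (auto simp: Phi_eq U(4))
      then show "emeasure \<nu> (Gamma \<Psi> {p. (inv h (fst p), inv h (snd p)) \<in> D} y) = 0"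
        using nuA D(3) by simp
    qed
  qed
  have P3: "persistent_meas \<nu> \<Psi>" if asm0: "persistent_meas \<mu> \<Phi>"
  proof -
    obtain S where S: "gen_set S" and H: "\<forall>E. entourage E \<longrightarrow> (\<exists>D B. entourage D \<and> full_meas_set \<mu> B \<and>
        (\<forall>\<Psi>' \<in> Act. (\<forall>x. \<forall>s\<in>S. (\<Psi>' s x, \<Phi> s x) \<in> D) \<longrightarrow>
           (\<forall>x\<in>B. \<exists>y. \<forall>g. (\<Psi>' g x, \<Phi> g y) \<in> E)))"
      using asm0 unfolding persistent_meas_def by blast
    show ?thesis unfolding persistent_meas_def
    proof (rule exI[of _ S], intro conjI allI impI)
      show "gen_set S" by fact
      fix E :: "('b \<times> 'b) set" assume E: "entourage E"
      obtain D B where D: "entourage D" and B: "full_meas_set \<mu> B" and pe: "\<forall>\<Psi>' \<in> Act. (\<forall>x. \<forall>s\<in>S. (\<Psi>' s x, \<Phi> s x) \<in> D) \<longrightarrow>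
           (\<forall>x\<in>B. \<exists>y. \<forall>g. (\<Psi>' g x, \<Phi> g y) \<in> {p. (h (fst p), h (snd p)) \<in> E})"
        using H entE[OF E] by blast
      show "\<exists>D B. entourage D \<and> full_meas_set \<nu> B \<and> (\<forall>\<Psi>' \<in> Act. (\<forall>x. \<forall>s\<in>S. (\<Psi>' s x, \<Psi> s x) \<in> D) \<longrightarrow>
           (\<forall>x\<in>B. \<exists>y. \<forall>g. (\<Psi>' g x, \<Psi> g y) \<in> E))"
      proof (rule exI[of _ "{p. (inv h (fst p), inv h (snd p)) \<in> D}"], rule exI[of _ "inv h -` B"], intro conjI ballI impI)
        show "entourage {p. (inv h (fst p), inv h (snd p)) \<in> D}" using entD[OF D] .
        show "full_meas_set \<nu> (inv h -` B)" using full[OF B] .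
        fix \<Psi>' :: "'g \<Rightarrow> 'b \<Rightarrow> 'b" and z
        assume A: "\<Psi>' \<in> Act" and cl: "\<forall>x. \<forall>s\<in>S. (\<Psi>' s x, \<Psi> s x) \<in> {p. (inv h (fst p), inv h (snd p)) \<in> D}"
          and z: "z \<in> inv h -` B"
        have cl': "\<forall>x. \<forall>s\<in>S. ((\<lambda>g. inv h \<circ> \<Psi>' g \<circ> h) s x, \<Phi> s x) \<in> D"
          using cl by (auto simp: Phi_eq)
        note R = mp[OF bspec[OF pe PhiAct[OF A]] cl']
        obtain y where "\<forall>g. ((\<lambda>g. inv h \<circ> \<Psi>' g \<circ> h) g (inv h z), \<Phi> g y) \<in> {p. (h (fst p), h (snd p)) \<in> E}"
          using bspec[OF R, of "inv h z"] z by blast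
        then show "\<exists>y. \<forall>g. (\<Psi>' g z, \<Psi> g y) \<in> E"
          by (intro exI[of _ "h y"]) (auto simp: hPhi U(4))
      qed
    qed
  qed
  have P4: "top_stable_meas \<nu> \<Psi>" if asm0: "top_stable_meas \<mu> \<Phi>"
  proof -
    obtain S where S: "gen_set S" and H: "\<forall>E. entourage E \<longrightarrow> (\<exists>D. entourage D \<and>
        (\<forall>\<Psi>' \<in> Act. (\<forall>x. \<forall>s\<in>S. (\<Psi>' s x, \<Phi> s x) \<in> D) \<longrightarrow>
           (\<exists>H. usc H \<and> (\<forall>x. compact (H x)) \<and> Dom H \<in> sets \<mu>
              \<and> emeasure \<mu> (space \<mu> - Dom H) = 0
              \<and> (\<forall>x. emeasure \<mu> (H x) = 0)
              \<and> (\<forall>x. \<forall>y\<in>H x. (x, y) \<in> E)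
              \<and> (\<forall>g x. \<Phi> g ` H x = H (\<Psi>' g x)))))"
      using asm0 unfolding top_stable_meas_def by (elim exE conjE) (rule that; assumption)
    show ?thesis unfolding top_stable_meas_def
    proof (rule exI[of _ S], intro conjI allI impI)
      show "gen_set S" by fact
      fix E :: "('b \<times> 'b) set" assume E: "entourage E"
      obtain D where D: "entourage D" and pe: "\<forall>\<Psi>' \<in> Act. (\<forall>x. \<forall>s\<in>S. (\<Psi>' s x, \<Phi> s x) \<in> D) \<longrightarrow>
           (\<exists>H. usc H \<and> (\<forall>x. compact (H x)) \<and> Dom H \<in> sets \<mu>
              \<and> emeasure \<mu> (space \<mu> - Dom H) = 0
              \<and> (\<forall>x. emeasure \<mu> (H x) = 0)
              \<and> (\<forall>x. \<forall>y\<in>H x. (x, y) \<in> {p. (h (fst p), h (snd p)) \<in> E})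
              \<and> (\<forall>g x. \<Phi> g ` H x = H (\<Psi>' g x)))"
        using H[rule_format, OF entE[OF E]] by (elim exE conjE) (rule that; assumption)
      show "\<exists>D. entourage D \<and> (\<forall>\<Psi>' \<in> Act. (\<forall>x. \<forall>s\<in>S. (\<Psi>' s x, \<Psi> s x) \<in> D) \<longrightarrow>
           (\<exists>H. usc H \<and> (\<forall>x. compact (H x)) \<and> Dom H \<in> sets \<nu>
              \<and> emeasure \<nu> (space \<nu> - Dom H) = 0
              \<and> (\<forall>x. emeasure \<nu> (H x) = 0)
              \<and> (\<forall>x. \<forall>y\<in>H x. (x, y) \<in> E)
              \<and> (\<forall>g x. \<Psi> g ` H x = H (\<Psi>' g x))))"
      proof (rule exI[of _ "{p. (inv h (fst p), inv h (snd p)) \<in> D}"], intro conjI ballI impI)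
        show "entourage {p. (inv h (fst p), inv h (snd p)) \<in> D}" using entD[OF D] .
        fix \<Psi>' :: "'g \<Rightarrow> 'b \<Rightarrow> 'b"
        assume A: "\<Psi>' \<in> Act" and cl: "\<forall>x. \<forall>s\<in>S. (\<Psi>' s x, \<Psi> s x) \<in> {p. (inv h (fst p), inv h (snd p)) \<in> D}"
        have cl': "\<forall>x. \<forall>s\<in>S. ((\<lambda>g. inv h \<circ> \<Psi>' g \<circ> h) s x, \<Phi> s x) \<in> D"
          using cl by (auto simp: Phi_eq)
        note R = mp[OF bspec[OF pe PhiAct[OF A]] cl']
        obtain H' where H1: "usc H'" and H2: "\<forall>x. compact (H' x)" and H3: "Dom H' \<in> sets \<mu>"
          and H4: "emeasure \<mu> (space \<mu> - Dom H') = 0" and H5: "\<forall>x. emeasure \<mu> (H' x) = 0"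
          and H6: "\<forall>x. \<forall>y\<in>H' x. (x, y) \<in> {p. (h (fst p), h (snd p)) \<in> E}"
          and H7: "\<forall>g x. \<Phi> g ` H' x = H' ((\<lambda>g. inv h \<circ> \<Psi>' g \<circ> h) g x)"
          using R by (elim exE conjE) (rule that; assumption)
        define HH where "HH = (\<lambda>z. h ` H' (inv h z))"
        have DomHH: "Dom HH = inv h -` Dom H'" unfolding HH_def Dom_def by auto
        show "\<exists>H. usc H \<and> (\<forall>x. compact (H x)) \<and> Dom H \<in> sets \<nu>
              \<and> emeasure \<nu> (space \<nu> - Dom H) = 0
              \<and> (\<forall>x. emeasure \<nu> (H x) = 0)
              \<and> (\<forall>x. \<forall>y\<in>H x. (x, y) \<in> E)
              \<and> (\<forall>g x. \<Psi> g ` H x = H (\<Psi>' g x))"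
        proof (intro exI[of _ HH] conjI allI ballI)
          show "usc HH" unfolding usc_def
          proof (intro ballI allI impI)
            fix z V assume z: "z \<in> Dom HH" and V: "open V \<and> HH z \<subseteq> V"
            have "inv h z \<in> Dom H'" using z DomHH by auto
            moreover have "open (h -` V)" using opv V by blast
            moreover have "H' (inv h z) \<subseteq> h -` V" using V unfolding HH_def by auto
            ultimately obtain D' where D': "entourage D'" "\<forall>y. (inv h z, y) \<in> D' \<longrightarrow> H' y \<subseteq> h -` V"
              using H1 unfolding usc_def by blast
            show "\<exists>D. entourage D \<and> (\<forall>y. (z, y) \<in> D \<longrightarrow> HH y \<subseteq> V)"
              using entD[OF D'(1)] D'(2) unfolding HH_def by (intro exI[of _ "{p. (inv h (fst p), inv h (snd p)) \<in> D'}"]) auto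
          qed
          fix z
          show "compact (HH z)" unfolding HH_def
            using compact_continuous_image[OF continuous_on_subset[OF U(2)] H2[rule_format]] by blast
          show "Dom HH \<in> sets \<nu>" using DomHH inB[OF H3] setsnu by simp
          have "h -` (space \<nu> - Dom HH) = space \<mu> - Dom H'" using DomHH spnu spmu U(5) by auto
          then show "emeasure \<nu> (space \<nu> - Dom HH) = 0" using nuA H4 by simp
          have "h -` HH z = H' (inv h z)" unfolding HH_def using bij_is_inj[OF U(1)] inj_vimage_image_eq by metis
          then show "emeasure \<nu> (HH z) = 0" using nuA H5 by simp
          fix g
          have "\<Psi> g ` HH z = h ` \<Phi> g ` H' (inv h z)" unfolding HH_def image_image by (simp add: hPhi)
          also have "\<dots> = HH (\<Psi>' g z)" unfolding HH_def using H7 by (simp add: U(4))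
          finally show "\<Psi> g ` HH z = HH (\<Psi>' g z)" .
        next
          fix z w assume "w \<in> HH z"
          then obtain y where y: "y \<in> H' (inv h z)" "w = h y" unfolding HH_def by blast
          then have "(h (inv h z), h y) \<in> E" using H6 by auto
          then show "(z, w) \<in> E" using y U(4) by simp
        qed
      qed
    qed
  qed
  show ?thesis using P1 P2 P3 P4 unfolding \<nu>_def by blast
qed

end
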